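(* Let $f$ be any function of unitation on $\{0,1\}^n$, $\sigma=1$, $\kappa\in\mathbb{N}$ and $\mu\geq (n+1)\cdot\kappa$, and assume that the search points $0^n$ and $1^n$ are contained in the population of the $(\mu+1)$ EA with phenotypic clearing with clearing radius $\sigma$, niche capacity $\kappa$ and population size $\mu$ running on $f$. Then the expected time (number of generations) until all niches are found, i.e., until for every $i\in\{0,\dots,n\}$ the population contains a search point with exactly $i$ ones, is $O(\mu n)$.
   Context: A function of unitation is $f:\{0,1\}^n\to\mathbb{R}$ with $f(x)=u(|x|_1)$ for some $u:\{0,\dots,n\}\to\mathbb{R}^+$, where $|x|_1$ is the number of 1-bits of $x$; fitness values are assumed positive. Niche $i$ is the set of search points with exactly $i$ ones. The $(\mu+1)$ EA with clearing (population size $\mu$, clearing radius $\sigma$, niche capacity $\kappa$, distance function $\mathrm{d}$): $P_0$ consists of $\mu$ bit strings chosen independently and uniformly at random. In generation $t$: choose a parent $x\in P_t$ uniformly at random; create $y$ by flipping each bit of $x$ independently with probability $1/n$; let $P_t^*=P_t\cup\{y\}$; update the fitness values of $P_t^*$ by the clearing procedure: sort $P_t^*$ by decreasing fitness; for $i=1,\dots,|P_t^*|$, if the current fitness of $P[i]$ is positive, set $w:=1$ and for $j=i+1,\dots,|P_t^*|$: if the current fitness of $P[j]$ is positive and $\mathrm{d}(P[i],P[j])<\sigma$ then, if $w<\kappa$ set $w:=w+1$, else set the fitness of $P[j]$ to $0$. Individuals whose fitness is not reset are winners, the others are cleared. Then choose $z\in P_t$ with worst (cleared) fitness uniformly at random;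 if the (cleared) fitness of $y$ is at least that of $z$, set $P_{t+1}=P_t^*\setminus\{z\}$, otherwise $P_{t+1}=P_t^*\setminus\{y\}$. Phenotypic clearing uses $\mathrm{d}(x,y)=\big||x|_1-|y|_1\big|$. *)

theory Defs
  imports "HOL-Probability.Probability"
begin

type_synonym bits = "bool list"

definition ones :: "bits \<Rightarrow> nat" where
  "ones x = count_list x True"

definition unit_fit :: "(nat \<Rightarrow> real) \<Rightarrow> bits \<Rightarrow> real" where
  "unit_fit u x = u (ones x)"

definition pheno_dist :: "bits \<Rightarrow> bits \<Rightarrow> nat" where
  "pheno_dist x y = (if ones y \<le> ones x then ones x - ones y else ones y - ones x)"

definition valid_sort :: "(bits \<Rightarrow> real) \<Rightarrow> (bits list \<Rightarrow> nat list) \<Rightarrow> bool" where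
  "valid_sort f srt \<longleftrightarrow> (\<forall>Q. distinct (srt Q) \<and> set (srt Q) = {..<length Q} \<and>
      sorted_wrt (\<lambda>a b. f (Q ! b) \<le> f (Q ! a)) (srt Q))"

text \<open>Inner loop of clearing (over j), state = (w, current fitness of each index).\<close>
definition clear_inner_step ::
  "(bits \<Rightarrow> bits \<Rightarrow> nat) \<Rightarrow> nat \<Rightarrow> nat \<Rightarrow> bits list \<Rightarrow> nat \<Rightarrow> nat
    \<Rightarrow> nat \<times> (nat \<Rightarrow> real) \<Rightarrow> nat \<times> (nat \<Rightarrow> real)" where
  "clear_inner_step d \<sigma> \<kappa> Q a j st = (case st of (w, fit) \<Rightarrow>
     if fit j > 0 \<and> d (Q ! a) (Q ! j) < \<sigma>
     then (if w < \<kappa> then (w + 1, fit) else (w, fit(j := 0)))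
     else (w, fit))"

fun clear_outer ::
  "(bits \<Rightarrow> bits \<Rightarrow> nat) \<Rightarrow> nat \<Rightarrow> nat \<Rightarrow> bits list \<Rightarrow> nat list
    \<Rightarrow> (nat \<Rightarrow> real) \<Rightarrow> (nat \<Rightarrow> real)" where
  "clear_outer d \<sigma> \<kappa> Q [] fit = fit"
| "clear_outer d \<sigma> \<kappa> Q (a # rest) fit =
     clear_outer d \<sigma> \<kappa> Q rest
       (if fit a > 0 then snd (fold (clear_inner_step d \<sigma> \<kappa> Q a) rest (1, fit)) else fit)"

definition clearing ::
  "(bits \<Rightarrow> real) \<Rightarrow> (bits list \<Rightarrow> nat list) \<Rightarrow> (bits \<Rightarrow> bits \<Rightarrow> nat) \<Rightarrow> nat \<Rightarrow> nat
    \<Rightarrow> bits list \<Rightarrow> nat \<Rightarrow> real" where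
  "clearing f srt d \<sigma> \<kappa> Q = clear_outer d \<sigma> \<kappa> Q (srt Q) (\<lambda>j. f (Q ! j))"

fun mutate :: "real \<Rightarrow> bits \<Rightarrow> bits pmf" where
  "mutate p [] = return_pmf []"
| "mutate p (b # bs) =
     bind_pmf (bernoulli_pmf p) (\<lambda>c. bind_pmf (mutate p bs) (\<lambda>r.
       return_pmf ((if c then \<not> b else b) # r)))"

text \<open>One generation of the (mu+1) EA with clearing. Populations are lists of length mu;
  P* = P @ [y] (index mu is the offspring).\<close>
definition ea_step ::
  "(bits \<Rightarrow> real) \<Rightarrow> (bits list \<Rightarrow> nat list) \<Rightarrow> (bits \<Rightarrow> bits \<Rightarrow> nat) \<Rightarrow> nat \<Rightarrow> nat
    \<Rightarrow> nat \<Rightarrow> nat \<Rightarrow> bits list \<Rightarrow> bits list pmf" where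
  "ea_step f srt d \<sigma> \<kappa> \<mu> n P =
     bind_pmf (pmf_of_set {..<\<mu>}) (\<lambda>i.
     bind_pmf (mutate (1 / real n) (P ! i)) (\<lambda>y.
       let Ps = P @ [y];
           cf = clearing f srt d \<sigma> \<kappa> Ps;
           worst = Min (cf ` {..<\<mu>})
       in bind_pmf (pmf_of_set {k. k < \<mu> \<and> cf k = worst}) (\<lambda>k.
            return_pmf (if cf k \<le> cf \<mu> then take k Ps @ drop (Suc k) Ps else P))))"

definition all_niches_found :: "nat \<Rightarrow> bits list \<Rightarrow> bool" where
  "all_niches_found n P \<longleftrightarrow> (\<forall>i\<le>n. \<exists>x\<in>set P. ones x = i)"

definition stopped_step :: "('a \<Rightarrow> bool) \<Rightarrow> ('a \<Rightarrow> 'a pmf) \<Rightarrow> 'a \<Rightarrow> 'a pmf" where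
  "stopped_step G K P = (if G P then return_pmf P else K P)"

fun pop_dist :: "('a \<Rightarrow> 'a pmf) \<Rightarrow> nat \<Rightarrow> 'a \<Rightarrow> 'a pmf" where
  "pop_dist K 0 P = return_pmf P"
| "pop_dist K (Suc t) P = bind_pmf (pop_dist K t P) K"

text \<open>E[T] = sum over t of Pr[T > t], T the first time t with G(P_t).\<close>
definition expected_hitting_time :: "('a \<Rightarrow> 'a pmf) \<Rightarrow> ('a \<Rightarrow> bool) \<Rightarrow> 'a \<Rightarrow> ennreal" where
  "expected_hitting_time K G P0 =
     (\<Sum>t. ennreal (measure_pmf.prob (pop_dist (stopped_step G K) t P0) {P. \<not> G P}))"

end

theory Submission
  imports Defs
begin

lemma prob_bind_pmf: "measure_pmf.prob (bind_pmf M N) A = (\<integral>x. measure_pmf.prob (N x) A \<partial>M)"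
proof -
  have "ennreal (measure_pmf.prob (bind_pmf M N) A) = (\<integral>\<^sup>+x. ennreal (measure_pmf.prob (N x) A) \<partial>M)"
    by (simp add: measure_pmf.emeasure_eq_measure[symmetric])
  also have "\<dots> = ennreal (\<integral>x. measure_pmf.prob (N x) A \<partial>M)"
    by (rule nn_integral_eq_integral) (auto intro!: measure_pmf.integrable_const_bound[where B=1])
  finally show ?thesis by (simp add: integral_nonneg_AE)
qed

lemma mutate_Cons_prob:
  assumes "0 \<le> p" "p \<le> 1"
  shows "measure_pmf.prob (mutate p (b # bs)) A =
     p * measure_pmf.prob (mutate p bs) {r. (\<not> b) # r \<in> A} + (1 - p) * measure_pmf.prob (mutate p bs) {r. b # r \<in> A}"
proof -
  have e: "\<And>c. bind_pmf (mutate p bs) (\<lambda>r. return_pmf ((if c then \<not> b else b) # r)) = map_pmf (\<lambda>r. (if c then \<not> b else b) # r) (mutate p bs)"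
    by (simp add: map_pmf_def)
  show ?thesis using assms
    by (simp add: prob_bind_pmf e vimage_def algebra_simps)
qed

lemma mutate_length: "y \<in> set_pmf (mutate p x) \<Longrightarrow> length y = length x"
  by (induction x arbitrary: y) auto

lemma mutate_same:
  assumes "0 \<le> p" "p \<le> 1"
  shows "measure_pmf.prob (mutate p x) {r. count_list r v = count_list x v} \<ge> (1 - p) ^ length x"
proof (induction x)
  case Nil then show ?case by simp
next
  case (Cons b bs)
  have "(1 - p) ^ length (b # bs) \<le> (1 - p) * measure_pmf.prob (mutate p bs) {r. count_list r v = count_list bs v}"
    using Cons assms by (simp add: mult_left_mono)
  also have "\<dots> \<le> measure_pmf.prob (mutate p (b # bs)) {r. count_list r v = count_list (b # bs) v}"
    using assms by (subst mutate_Cons_prob[OF assms]) (simp add: mult_nonneg_nonneg)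
  finally show ?case .
qed

lemma mutate_up:
  fixes p :: real
  assumes "0 \<le> p" "p \<le> 1"
  shows "measure_pmf.prob (mutate p x) {r. count_list r v = count_list x v + 1}
          \<ge> count_list x (\<not> v) * p * (1 - p) ^ (length x - 1)"
proof (induction x)
  case Nil then show ?case by simp
next
  case (Cons b bs)
  let ?P = "\<lambda>A. measure_pmf.prob (mutate p bs) A"
  have c1: "count_list bs (\<not> v) * p * (1 - p) ^ length bs = (1 - p) * (count_list bs (\<not> v) * p * (1 - p) ^ (length bs - 1))"
  proof (cases "length bs")
    case 0 then show ?thesis by simp
  next
    case (Suc m) then show ?thesis by simp
  qed
  have A: "(1 - p) * (count_list bs (\<not> v) * p * (1 - p) ^ (length bs - 1)) \<le> (1 - p) * ?P {r. count_list r v = count_list bs v + 1}"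
    using Cons assms by (intro mult_left_mono) auto
  have B: "(if b = (\<not> v) then p * (1 - p) ^ length bs else 0) \<le> p * ?P {r. count_list ((\<not> b) # r) v = count_list (b # bs) v + 1}"
  proof (cases "b = (\<not> v)")
    case True
    then have "p * (1 - p) ^ length bs \<le> p * ?P {r. count_list r v = count_list bs v}"
      using assms mutate_same[OF assms, of bs v] by (intro mult_left_mono) auto
    then show ?thesis using True by simp
  next
    case False then show ?thesis using assms by simp
  qed
  have "count_list (b # bs) (\<not> v) * p * (1 - p) ^ (length (b # bs) - 1) =
        count_list bs (\<not> v) * p * (1 - p) ^ length bs + (if b = (\<not> v) then p * (1 - p) ^ length bs else 0)"
    by (simp add: algebra_simps)
  also have "\<dots> \<le> (1 - p) * ?P {r. count_list r v = count_list bs v + 1} + p * ?P {r. count_list ((\<not> b) # r) v = count_list (b # bs) v + 1}"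
    using A B c1 by linarith
  also have "\<dots> = measure_pmf.prob (mutate p (b # bs)) {r. count_list r v = count_list (b # bs) v + 1}"
    using assms by (subst mutate_Cons_prob[OF assms]) simp
  finally show ?case .
qed


lemma cis: "clear_inner_step d \<sigma> \<kappa> Q a j (w, fit) = (if fit j > 0 \<and> d (Q ! a) (Q ! j) < \<sigma>
     then (if w < \<kappa> then (w + 1, fit) else (w, fit(j := 0))) else (w, fit))"
  by (simp add: clear_inner_step_def)

lemma inner:
  assumes "fold (clear_inner_step d \<sigma> \<kappa> Q a) R (w, fit) = (w', fit')" "distinct R"
  shows "(\<forall>j. fit' j = fit j \<or> (fit' j = 0 \<and> j \<in> set R \<and> fit j > 0 \<and> d (Q!a) (Q!j) < \<sigma>)) \<and>
         (w \<le> \<kappa> \<longrightarrow> card {j\<in>set R. d (Q!a) (Q!j) < \<sigma> \<and> fit' j > 0} + w \<le> \<kappa>)"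
  using assms
proof (induction R arbitrary: w fit)
  case Nil then show ?case by simp
next
  case (Cons x R)
  have dx: "x \<notin> set R" "distinct R" using Cons.prems by auto
  have split: "{j\<in>set (x # R). d (Q!a) (Q!j) < \<sigma> \<and> fit' j > 0} =
      (if d (Q!a) (Q!x) < \<sigma> \<and> fit' x > 0 then insert x else id) {j\<in>set R. d (Q!a) (Q!j) < \<sigma> \<and> fit' j > 0}"
    by auto
  show ?case
  proof (cases "fit x > 0 \<and> d (Q!a) (Q!x) < \<sigma>")
    case c1: True
    show ?thesis
    proof (cases "w < \<kappa>")
      case True
      then have f: "fold (clear_inner_step d \<sigma> \<kappa> Q a) R (w + 1, fit) = (w', fit')"
        using Cons.prems c1 by (simp add: cis)
      note IH = Cons.IH[OF f dx(2)]
      have "fit' x = fit x" using IH dx by auto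
      then show ?thesis using IH True c1 dx split by (auto simp: card_insert_if)
    next
      case False
      then have f: "fold (clear_inner_step d \<sigma> \<kappa> Q a) R (w, fit(x := 0)) = (w', fit')"
        using Cons.prems c1 by (simp add: cis)
      note IH = Cons.IH[OF f dx(2)]
      have "fit' x = 0" using spec[OF conjunct1[OF IH], of x] by auto
      have p1: "\<forall>j. fit' j = fit j \<or> (fit' j = 0 \<and> j \<in> set (x # R) \<and> fit j > 0 \<and> d (Q!a) (Q!j) < \<sigma>)"
      proof
        fix j show "fit' j = fit j \<or> (fit' j = 0 \<and> j \<in> set (x # R) \<and> fit j > 0 \<and> d (Q!a) (Q!j) < \<sigma>)"
        proof (cases "j = x")
          case True then show ?thesis using \<open>fit' x = 0\<close> c1 by simp
        next
          case False then show ?thesis using spec[OF conjunct1[OF IH], of j] by auto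
        qed
      qed
      have p2: "w \<le> \<kappa> \<longrightarrow> card {j\<in>set (x # R). d (Q!a) (Q!j) < \<sigma> \<and> fit' j > 0} + w \<le> \<kappa>"
        using conjunct2[OF IH] split \<open>fit' x = 0\<close> by simp
      show ?thesis using p1 p2 by blast
    qed
  next
    case c1: False
    then have f: "fold (clear_inner_step d \<sigma> \<kappa> Q a) R (w, fit) = (w', fit')"
      using Cons.prems by (auto simp add: cis)
    note IH = Cons.IH[OF f dx(2)]
    have "fit' x = fit x" using IH dx by auto
    then show ?thesis using IH c1 dx split by auto
  qed
qed

lemma outer:
  assumes hS: "\<And>a j. (d (Q!a) (Q!j) < \<sigma>) = (N a = N j)" and k1: "1 \<le> \<kappa>"
  shows "distinct R \<Longrightarrow> set R \<inter> D = {} \<Longrightarrow> finite D \<Longrightarrow>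
   (\<forall>j\<in>D \<union> set R. fit j = 0 \<or> fit j = f0 j) \<Longrightarrow>
   (\<forall>j\<in>D \<union> set R. fit j = 0 \<longrightarrow> (\<exists>j'\<in>D. j' \<noteq> j \<and> N j' = N j \<and> fit j' > 0)) \<Longrightarrow>
   (\<forall>c. (\<exists>j\<in>D. N j = c \<and> fit j > 0) \<longrightarrow> card {j\<in>D \<union> set R. N j = c \<and> fit j > 0} \<le> \<kappa>) \<Longrightarrow>
   (let fit' = clear_outer d \<sigma> \<kappa> Q R fit; U = D \<union> set R in
   (\<forall>j\<in>U. fit' j = 0 \<or> fit' j = f0 j) \<and>
   (\<forall>j\<in>U. fit' j = 0 \<longrightarrow> (\<exists>j'\<in>U. j' \<noteq> j \<and> N j' = N j \<and> fit' j' > 0)) \<and>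
   (\<forall>c. (\<exists>j\<in>U. N j = c \<and> fit' j > 0) \<longrightarrow> card {j\<in>U. N j = c \<and> fit' j > 0} \<le> \<kappa>))"
proof (induction R arbitrary: D fit)
  case Nil then show ?case by auto
next
  case (Cons a R)
  define fit1 where "fit1 = (if fit a > 0 then snd (fold (clear_inner_step d \<sigma> \<kappa> Q a) R (1, fit)) else fit)"
  have co: "clear_outer d \<sigma> \<kappa> Q (a # R) fit = clear_outer d \<sigma> \<kappa> Q R fit1"
    by (simp add: fit1_def)
  have dR: "distinct R" "a \<notin> set R" using Cons.prems by auto
  have U: "insert a D \<union> set R = D \<union> set (a # R)" by auto
  have hyps: "set R \<inter> insert a D = {}" "finite (insert a D)" using Cons.prems by auto
  have i1: "\<forall>j\<in>insert a D \<union> set R. fit1 j = 0 \<or> fit1 j = f0 j"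
   and i2: "\<forall>j\<in>insert a D \<union> set R. fit1 j = 0 \<longrightarrow> (\<exists>j'\<in>insert a D. j' \<noteq> j \<and> N j' = N j \<and> fit1 j' > 0)"
   and i3: "\<forall>c. (\<exists>j\<in>insert a D. N j = c \<and> fit1 j > 0) \<longrightarrow> card {j\<in>insert a D \<union> set R. N j = c \<and> fit1 j > 0} \<le> \<kappa>"
  proof -
    have "(\<forall>j\<in>insert a D \<union> set R. fit1 j = 0 \<or> fit1 j = f0 j) \<and>
      (\<forall>j\<in>insert a D \<union> set R. fit1 j = 0 \<longrightarrow> (\<exists>j'\<in>insert a D. j' \<noteq> j \<and> N j' = N j \<and> fit1 j' > 0)) \<and>
      (\<forall>c. (\<exists>j\<in>insert a D. N j = c \<and> fit1 j > 0) \<longrightarrow> card {j\<in>insert a D \<union> set R. N j = c \<and> fit1 j > 0} \<le> \<kappa>)"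
    proof (cases "fit a > 0")
      case False
      then have f1: "fit1 = fit" by (simp add: fit1_def)
      have "\<forall>c. (\<exists>j\<in>insert a D. N j = c \<and> fit j > 0) \<longrightarrow> (\<exists>j\<in>D. N j = c \<and> fit j > 0)"
        using False by auto
      have q1: "\<forall>j\<in>insert a D \<union> set R. fit1 j = 0 \<or> fit1 j = f0 j"
        using Cons.prems(4) unfolding f1 U .
      have q2: "\<forall>j\<in>insert a D \<union> set R. fit1 j = 0 \<longrightarrow> (\<exists>j'\<in>insert a D. j' \<noteq> j \<and> N j' = N j \<and> fit1 j' > 0)"
        using Cons.prems(5) unfolding f1 U by blast
      have q3: "\<forall>c. (\<exists>j\<in>insert a D. N j = c \<and> fit1 j > 0) \<longrightarrow> card {j\<in>insert a D \<union> set R. N j = c \<and> fit1 j > 0} \<le> \<kappa>"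
        using Cons.prems(6) False unfolding f1 U by blast
      show ?thesis using q1 q2 q3 by blast
    next
      case apos: True
      obtain w' fit' where fo: "fold (clear_inner_step d \<sigma> \<kappa> Q a) R (1, fit) = (w', fit')"
        by (metis surj_pair)
      have f1: "fit1 = fit'" using apos fo by (simp add: fit1_def)
      note I = inner[OF fo dR(1)]
      have ch: "\<And>j. fit' j = fit j \<or> (fit' j = 0 \<and> j \<in> set R \<and> fit j > 0 \<and> N a = N j)"
        using I hS by blast
      have cap: "card {j\<in>set R. N a = N j \<and> fit' j > 0} + 1 \<le> \<kappa>"
        using I hS k1 by simp
      have nR: "\<And>j. j \<notin> set R \<Longrightarrow> fit' j = fit j" using ch by blast
      have fa: "fit' a = fit a" using nR dR by blast
      have p1: "\<forall>j\<in>insert a D \<union> set R. fit1 j = 0 \<or> fit1 j = f0 j"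
      proof
        fix j assume "j \<in> insert a D \<union> set R"
        then have "fit j = 0 \<or> fit j = f0 j" using Cons.prems(4) U by blast
        then show "fit1 j = 0 \<or> fit1 j = f0 j" using ch[of j] f1 by auto
      qed
      have p2: "\<forall>j\<in>insert a D \<union> set R. fit1 j = 0 \<longrightarrow> (\<exists>j'\<in>insert a D. j' \<noteq> j \<and> N j' = N j \<and> fit1 j' > 0)"
      proof (intro ballI impI)
        fix j assume j: "j \<in> insert a D \<union> set R" "fit1 j = 0"
        show "\<exists>j'\<in>insert a D. j' \<noteq> j \<and> N j' = N j \<and> fit1 j' > 0"
        proof (cases "fit' j = fit j")
          case True
          then obtain j' where "j'\<in>D" "j' \<noteq> j" "N j' = N j" "fit j' > 0"
            using Cons.prems(5) j U f1 by auto
          moreover have "fit' j' = fit j'" using nR Cons.prems(2) \<open>j' \<in> D\<close> by auto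
          ultimately show ?thesis using f1 by auto
        next
          case False
          then have "j \<in> set R" "N a = N j" using ch by blast+
          then show ?thesis using f1 fa apos dR by auto
        qed
      qed
      have p3: "\<forall>c. (\<exists>j\<in>insert a D. N j = c \<and> fit1 j > 0) \<longrightarrow> card {j\<in>insert a D \<union> set R. N j = c \<and> fit1 j > 0} \<le> \<kappa>"
      proof (intro allI impI)
        fix c assume "\<exists>j\<in>insert a D. N j = c \<and> fit1 j > 0"
        have fin: "finite (D \<union> set (a # R))" using Cons.prems(3) by simp
        show "card {j\<in>insert a D \<union> set R. N j = c \<and> fit1 j > 0} \<le> \<kappa>"
        proof (cases "\<exists>j\<in>D. N j = c \<and> fit j > 0")
          case True
          then have old: "card {j\<in>D \<union> set (a # R). N j = c \<and> fit j > 0} \<le> \<kappa>" using Cons.prems(6) by blast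
          have "{j\<in>insert a D \<union> set R. N j = c \<and> fit1 j > 0} \<subseteq> {j\<in>D \<union> set (a # R). N j = c \<and> fit j > 0}"
          proof
            fix j assume "j \<in> {j\<in>insert a D \<union> set R. N j = c \<and> fit1 j > 0}"
            then show "j \<in> {j\<in>D \<union> set (a # R). N j = c \<and> fit j > 0}" using ch[of j] f1 by auto
          qed
          moreover have "finite {j\<in>D \<union> set (a # R). N j = c \<and> fit j > 0}" using fin by simp
          ultimately have "card {j\<in>insert a D \<union> set R. N j = c \<and> fit1 j > 0} \<le> card {j\<in>D \<union> set (a # R). N j = c \<and> fit j > 0}"
            using card_mono by blast
          then show ?thesis using old by linarith
        next
          case False
          have ca: "c = N a"
          proof -
            obtain j where j: "j\<in>insert a D" "N j = c" "fit1 j > 0" using \<open>\<exists>j\<in>insert a D. N j = c \<and> fit1 j > 0\<close> by blast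
            show ?thesis
            proof (cases "j = a")
              case True then show ?thesis using j by simp
            next
              case False
              then have "j \<in> D" using j by simp
              moreover have "j \<notin> set R" using \<open>j \<in> D\<close> Cons.prems(2) by auto
              ultimately have "fit j > 0" using j nR[of j] f1 by auto
              then show ?thesis using \<open>j\<in>D\<close> j \<open>\<not> (\<exists>j\<in>D. N j = c \<and> fit j > 0)\<close> by blast
            qed
          qed
          have sub: "{j\<in>insert a D \<union> set R. N j = c \<and> fit1 j > 0} \<subseteq> insert a {j\<in>set R. N a = N j \<and> fit' j > 0}"
          proof
            fix j assume j: "j \<in> {j\<in>insert a D \<union> set R. N j = c \<and> fit1 j > 0}"
            show "j \<in> insert a {j\<in>set R. N a = N j \<and> fit' j > 0}"
            proof (cases "j \<in> D")
              case True
              moreover have "j \<notin> set R" using True Cons.prems(2) by auto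
              ultimately have "fit j > 0" using j nR[of j] f1 by auto
              then show ?thesis using True j False by blast
            next
              case False
              then show ?thesis using j ca f1 by auto
            qed
          qed
          have "card {j\<in>insert a D \<union> set R. N j = c \<and> fit1 j > 0} \<le> card (insert a {j\<in>set R. N a = N j \<and> fit' j > 0})"
            by (rule card_mono[OF _ sub]) simp
          also have "\<dots> \<le> card {j\<in>set R. N a = N j \<and> fit' j > 0} + 1"
            by (simp add: card_insert_le_m1 card_insert_if)
          also have "\<dots> \<le> \<kappa>" by (rule cap)
          finally show ?thesis .
        qed
      qed
      show ?thesis using p1 p2 p3 by blast
    qed
    then show "\<forall>j\<in>insert a D \<union> set R. fit1 j = 0 \<or> fit1 j = f0 j"
      "\<forall>j\<in>insert a D \<union> set R. fit1 j = 0 \<longrightarrow> (\<exists>j'\<in>insert a D. j' \<noteq> j \<and> N j' = N j \<and> fit1 j' > 0)"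
      "\<forall>c. (\<exists>j\<in>insert a D. N j = c \<and> fit1 j > 0) \<longrightarrow> card {j\<in>insert a D \<union> set R. N j = c \<and> fit1 j > 0} \<le> \<kappa>"
      by blast+
  qed
  show ?case using Cons.IH[OF dR(1) hyps i1 i2 i3] unfolding co U .
qed


lemma clearing_props:
  assumes vs: "valid_sort f srt" and hS: "\<And>a j. (d (Q!a) (Q!j) < \<sigma>) = (N a = N j)" and k1: "1 \<le> \<kappa>"
    and pos: "\<And>j. j < length Q \<Longrightarrow> f (Q!j) > 0"
  shows "\<forall>j<length Q. clearing f srt d \<sigma> \<kappa> Q j = 0 \<or> clearing f srt d \<sigma> \<kappa> Q j = f (Q!j)"
    "\<forall>j<length Q. clearing f srt d \<sigma> \<kappa> Q j = 0 \<longrightarrow>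
        (\<exists>j'<length Q. j' \<noteq> j \<and> N j' = N j \<and> clearing f srt d \<sigma> \<kappa> Q j' > 0)"
    "\<And>c. card {j. j < length Q \<and> N j = c \<and> clearing f srt d \<sigma> \<kappa> Q j > 0} \<le> \<kappa>"
proof -
  let ?R = "srt Q"
  have d: "distinct ?R" and s: "set ?R = {..<length Q}" using vs unfolding valid_sort_def by auto
  note O = outer[where d=d and Q=Q and \<sigma>=\<sigma> and N=N and \<kappa>=\<kappa>, OF hS k1 d, of "{}" "\<lambda>j. f (Q!j)" "\<lambda>j. f (Q!j)"]
  have O': "let fit' = clearing f srt d \<sigma> \<kappa> Q; U = {..<length Q} in
   (\<forall>j\<in>U. fit' j = 0 \<or> fit' j = f (Q!j)) \<and>
   (\<forall>j\<in>U. fit' j = 0 \<longrightarrow> (\<exists>j'\<in>U. j' \<noteq> j \<and> N j' = N j \<and> fit' j' > 0)) \<and>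
   (\<forall>c. (\<exists>j\<in>U. N j = c \<and> fit' j > 0) \<longrightarrow> card {j\<in>U. N j = c \<and> fit' j > 0} \<le> \<kappa>)"
    using O pos s unfolding clearing_def by (auto simp: less_imp_neq[symmetric])
  show "\<forall>j<length Q. clearing f srt d \<sigma> \<kappa> Q j = 0 \<or> clearing f srt d \<sigma> \<kappa> Q j = f (Q!j)"
    using O' by (simp add: Let_def)
  show "\<forall>j<length Q. clearing f srt d \<sigma> \<kappa> Q j = 0 \<longrightarrow>
        (\<exists>j'<length Q. j' \<noteq> j \<and> N j' = N j \<and> clearing f srt d \<sigma> \<kappa> Q j' > 0)"
    using O' unfolding Let_def lessThan_iff by blast
  fix c
  show "card {j. j < length Q \<and> N j = c \<and> clearing f srt d \<sigma> \<kappa> Q j > 0} \<le> \<kappa>"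
  proof (cases "\<exists>j<length Q. N j = c \<and> clearing f srt d \<sigma> \<kappa> Q j > 0")
    case True
    then show ?thesis using O' unfolding Let_def lessThan_iff by blast
  next
    case False
    then have "{j. j < length Q \<and> N j = c \<and> clearing f srt d \<sigma> \<kappa> Q j > 0} = {}" by blast
    then show ?thesis by (simp del: Collect_empty_eq)
  qed
qed


definition sel :: "(bits \<Rightarrow> real) \<Rightarrow> (bits list \<Rightarrow> nat list) \<Rightarrow> (bits \<Rightarrow> bits \<Rightarrow> nat) \<Rightarrow> nat \<Rightarrow> nat
    \<Rightarrow> nat \<Rightarrow> bits list \<Rightarrow> bits \<Rightarrow> bits list pmf" where
  "sel f srt d \<sigma> \<kappa> \<mu> P y =
       (let Ps = P @ [y];
           cf = clearing f srt d \<sigma> \<kappa> Ps;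
           worst = Min (cf ` {..<\<mu>})
       in bind_pmf (pmf_of_set {k. k < \<mu> \<and> cf k = worst}) (\<lambda>k.
            return_pmf (if cf k \<le> cf \<mu> then take k Ps @ drop (Suc k) Ps else P)))"

lemma ea_step_sel: "ea_step f srt d \<sigma> \<kappa> \<mu> n P =
  bind_pmf (pmf_of_set {..<\<mu>}) (\<lambda>i. bind_pmf (mutate (1 / real n) (P ! i)) (sel f srt d \<sigma> \<kappa> \<mu> P))"
  unfolding ea_step_def sel_def ..

lemma ones_le: "ones x \<le> length x"
  unfolding ones_def by (induction x) auto

lemma remove_mem:
  assumes "j < length L" "j \<noteq> k"
  shows "L ! j \<in> set (take k L @ drop (Suc k) L)"
proof (cases "j < k")
  case True
  then have "take k L ! j = L ! j" "j < length (take k L)" using assms by auto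
  then show ?thesis by (metis UnI1 nth_mem set_append)
next
  case False
  then have jk: "j > k" using assms by auto
  then have "drop (Suc k) L ! (j - Suc k) = L ! j" "j - Suc k < length (drop (Suc k) L)" using assms by auto
  then show ?thesis by (metis UnI2 nth_mem set_append)
qed

lemma pheno_lt1: "(pheno_dist x y < 1) = (ones x = ones y)"
  unfolding pheno_dist_def by auto

lemma sel_props:
  assumes k1: "1 \<le> \<kappa>" and mu: "\<mu> \<ge> (n + 1) * \<kappa>" and upos: "\<forall>i\<le>n. u i > 0"
    and vs: "valid_sort (unit_fit u) srt" and lP: "length P = \<mu>" and lx: "\<forall>x\<in>set P. length x = n"
    and ly: "length y = n" and Q: "Q \<in> set_pmf (sel (unit_fit u) srt pheno_dist 1 \<kappa> \<mu> P y)"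
  shows "length Q = \<mu> \<and> (\<forall>x\<in>set Q. length x = n) \<and> ones ` set P \<subseteq> ones ` set Q \<and>
         (ones y \<notin> ones ` set P \<longrightarrow> ones y \<in> ones ` set Q)"
proof -
  define Ps where "Ps = P @ [y]"
  define cf where "cf = clearing (unit_fit u) srt pheno_dist 1 \<kappa> Ps"
  define worst where "worst = Min (cf ` {..<\<mu>})"
  define W where "W = {k. k < \<mu> \<and> cf k = worst}"
  define N where "N = (\<lambda>j. ones (Ps ! j))"
  have lPs: "length Ps = Suc \<mu>" using lP Ps_def by simp
  have Psm: "Ps ! \<mu> = y" unfolding Ps_def using lP by (metis nth_append_length)
  have PsP: "\<And>j. j < \<mu> \<Longrightarrow> Ps ! j = P ! j" using lP Ps_def by (simp add: nth_append)
  have lall: "\<forall>x\<in>set Ps. length x = n" using lx ly Ps_def by auto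
  have "(n + 1) * \<kappa> \<ge> 1" using k1 by simp
  then have mu1: "\<mu> \<ge> 1" using mu by linarith
  have hS: "\<And>a j. (pheno_dist (Ps!a) (Ps!j) < 1) = (N a = N j)" unfolding N_def by (rule pheno_lt1)
  have pos: "\<And>j. j < length Ps \<Longrightarrow> unit_fit u (Ps!j) > 0"
  proof -
    fix j assume "j < length Ps"
    then have "length (Ps ! j) = n" using lall by auto
    then have "ones (Ps!j) \<le> n" using ones_le[of "Ps!j"] by simp
    then show "unit_fit u (Ps!j) > 0" using upos by (simp add: unit_fit_def)
  qed
  note CP = clearing_props[where d=pheno_dist and Q=Ps and \<sigma>=1 and N=N, OF vs hS k1 pos, folded cf_def, unfolded lPs]
  have F1: "cf j = 0 \<or> cf j > 0" if "j < Suc \<mu>" for j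
    using CP(1) pos[of j] lPs that by auto
  have nn: "\<And>j. j < Suc \<mu> \<Longrightarrow> cf j \<ge> 0" using F1 by fastforce
  have F2: "\<And>j. j < Suc \<mu> \<Longrightarrow> cf j = 0 \<Longrightarrow> \<exists>j'<Suc \<mu>. j' \<noteq> j \<and> N j' = N j \<and> cf j' > 0"
    using CP(2) by blast
  have F4: "\<exists>j<Suc \<mu>. cf j = 0"
  proof (rule ccontr)
    assume "\<not> ?thesis"
    then have allp: "\<And>j. j < Suc \<mu> \<Longrightarrow> cf j > 0" using F1 by blast
    have Nle: "N j \<le> n" if "j < Suc \<mu>" for j
    proof -
      have "Ps ! j \<in> set Ps" using that lPs by simp
      then show ?thesis using lall ones_le[of "Ps!j"] unfolding N_def by simp
    qed
    have "{..<Suc \<mu>} \<subseteq> (\<Union>c\<in>{..n}. {j. j < Suc \<mu> \<and> N j = c \<and> cf j > 0})"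
      using allp Nle by auto
    then have "card {..<Suc \<mu>} \<le> card (\<Union>c\<in>{..n}. {j. j < Suc \<mu> \<and> N j = c \<and> cf j > 0})"
      by (intro card_mono) auto
    also have "\<dots> \<le> (\<Sum>c\<in>{..n}. card {j. j < Suc \<mu> \<and> N j = c \<and> cf j > 0})"
      by (rule card_UN_le) simp
    also have "\<dots> \<le> (\<Sum>c\<in>{..n}. \<kappa>)" by (intro sum_mono CP(3))
    also have "\<dots> = (n + 1) * \<kappa>" by simp
    finally show False using mu by simp
  qed
  have fin: "finite (cf ` {..<\<mu>})" "cf ` {..<\<mu>} \<noteq> {}" using mu1 by (auto simp: lessThan_empty_iff)
  have wle: "\<And>i. i < \<mu> \<Longrightarrow> worst \<le> cf i" unfolding worst_def using fin by auto
  have win: "worst \<in> cf ` {..<\<mu>}" unfolding worst_def using fin Min_in by blast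
  have Wne: "W \<noteq> {}" "finite W" using win W_def by auto
  have key_new: "cf k \<le> cf \<mu>" if nw: "ones y \<notin> ones ` set P" and kW: "k \<in> W" for k
  proof -
    have "cf \<mu> \<noteq> 0"
    proof
      assume "cf \<mu> = 0"
      then obtain j' where j': "j' < Suc \<mu>" "j' \<noteq> \<mu>" "N j' = N \<mu>" using F2 by blast
      then have "j' < \<mu>" by simp
      then have "P ! j' \<in> set P" "ones (P ! j') = ones y" using j' lP PsP Psm N_def by auto
      then have "ones y \<in> ones ` set P" by (metis imageI)
      then show False using nw by blast
    qed
    then have cm: "cf \<mu> > 0" using F1 by blast
    obtain j0 where j0: "j0 < Suc \<mu>" "cf j0 = 0" using F4 by blast
    then have "j0 < \<mu>" using cm by (metis less_SucE less_irrefl)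
    then have "worst \<le> 0" using wle j0 by metis
    then show ?thesis using kW W_def cm by auto
  qed
  have sQ: "set_pmf (sel (unit_fit u) srt pheno_dist 1 \<kappa> \<mu> P y) =
     (\<Union>k\<in>W. {if cf k \<le> cf \<mu> then take k Ps @ drop (Suc k) Ps else P})"
    unfolding sel_def Let_def Ps_def[symmetric] cf_def[symmetric] worst_def[symmetric] W_def[symmetric]
    using Wne by simp
  obtain k where kW: "k \<in> W" and Qk: "Q = (if cf k \<le> cf \<mu> then take k Ps @ drop (Suc k) Ps else P)"
    using Q sQ by auto
  have kmu: "k < \<mu>" using kW W_def by auto
  show ?thesis
  proof (cases "cf k \<le> cf \<mu>")
    case False
    then show ?thesis using Qk lP lx key_new kW by auto
  next
    case True
    then have QQ: "Q = take k Ps @ drop (Suc k) Ps" using Qk by simp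
    have l1: "length Q = \<mu>" using QQ lPs kmu by simp
    have sub: "set Q \<subseteq> set Ps" unfolding QQ by (auto dest: in_set_takeD in_set_dropD)
    have l2: "\<forall>x\<in>set Q. length x = n" using sub lall by blast
    have mem: "\<And>j. j < Suc \<mu> \<Longrightarrow> j \<noteq> k \<Longrightarrow> Ps ! j \<in> set Q"
      using remove_mem[of _ Ps k] lPs QQ by simp
    have ck0: "cf k = 0"
    proof (rule ccontr)
      assume "cf k \<noteq> 0"
      then have "cf k > 0" using F1[of k] kmu by simp
      then have wp: "worst > 0" using kW W_def by auto
      obtain j0 where j0: "j0 < Suc \<mu>" "cf j0 = 0" using F4 by blast
      have "j0 = \<mu>"
      proof (rule ccontr)
        assume "j0 \<noteq> \<mu>"
        then have "j0 < \<mu>" using j0 by simp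
        then show False using wle wp j0 by fastforce
      qed
      then show False using True \<open>cf k > 0\<close> j0 by simp
    qed
    have mono: "ones ` set P \<subseteq> ones ` set Q"
    proof
      fix o' assume "o' \<in> ones ` set P"
      then obtain j where j: "j < \<mu>" "o' = ones (P ! j)" using lP by (auto simp: in_set_conv_nth)
      show "o' \<in> ones ` set Q"
      proof (cases "j = k")
        case False
        then have "Ps ! j \<in> set Q" using mem j by simp
        then show ?thesis using j PsP by auto
      next
        case True
        then obtain j' where j': "j' < Suc \<mu>" "j' \<noteq> k" "N j' = N k" using F2[of k] ck0 kmu by auto
        then have "Ps ! j' \<in> set Q" using mem by simp
        moreover have "ones (Ps ! j') = o'" using j' j True PsP N_def by simp
        ultimately show ?thesis by blast
      qed
    qed
    have new: "ones y \<in> ones ` set Q"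
    proof -
      have "Ps ! \<mu> \<in> set Q" using mem kmu by simp
      then show ?thesis using Psm by auto
    qed
    show ?thesis using l1 l2 mono new by blast
  qed
qed


lemma exp_bound:
  assumes "n \<ge> (1::nat)"
  shows "(1 - 1 / real n) ^ (n - 1) \<ge> exp (-1)"
proof (cases "n = 1")
  case True then show ?thesis by simp
next
  case False
  define m where "m = n - 1"
  have m1: "m \<ge> 1" using assms False m_def by simp
  have nm: "real n = real m + 1" using assms m_def by simp
  have "(1 + 1 / real m) ^ m \<le> exp (1 / real m) ^ m"
    by (intro power_mono) (use exp_ge_add_one_self[of "1 / real m"] in auto)
  also have "\<dots> = exp 1" using m1 by (simp add: exp_of_nat_mult[symmetric])
  finally have A: "(1 + 1 / real m) ^ m \<le> exp 1" .
  have B: "(1 - 1 / real n) = 1 / (1 + 1 / real m)" using m1 nm by (simp add: field_simps)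
  have pos: "(1 + 1 / real m) ^ m > 0" by (intro zero_less_power) (simp add: add_pos_nonneg)
  have "(1 - 1 / real n) ^ (n - 1) = 1 / (1 + 1 / real m) ^ m" using B m_def by (simp add: power_one_over)
  also have "\<dots> \<ge> 1 / exp 1" using A pos by (intro divide_left_mono) auto
  finally show ?thesis by (simp add: exp_minus field_simps)
qed

lemma count_sum: "count_list x True + count_list x False = length x"
  by (induction x) auto

lemma bind_prob_ge:
  assumes "\<And>y. y \<in> set_pmf M \<Longrightarrow> y \<in> A \<Longrightarrow> set_pmf (N y) \<subseteq> E"
  shows "measure_pmf.prob (bind_pmf M N) E \<ge> measure_pmf.prob M A"
proof -
  have "emeasure (measure_pmf M) A = (\<integral>\<^sup>+y. indicator A y \<partial>M)" by simp
  also have "\<dots> \<le> (\<integral>\<^sup>+y. emeasure (N y) E \<partial>M)"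
  proof (rule nn_integral_mono_AE, rule AE_pmfI)
    fix y assume y: "y \<in> set_pmf M"
    show "indicator A y \<le> emeasure (measure_pmf (N y)) E"
    proof (cases "y \<in> A")
      case True
      then have "emeasure (measure_pmf (N y)) E = 1"
        using assms[OF y True] by (subst measure_pmf.emeasure_eq_1_AE) (auto intro!: AE_pmfI)
      then show ?thesis using True by simp
    next
      case False then show ?thesis by simp
    qed
  qed
  also have "\<dots> = emeasure (bind_pmf M N) E" by simp
  finally show ?thesis by (simp add: measure_pmf.emeasure_eq_measure)
qed


definition InvP :: "nat \<Rightarrow> nat \<Rightarrow> bits list \<Rightarrow> bool" where
  "InvP n \<mu> P \<longleftrightarrow> length P = \<mu> \<and> (\<forall>x\<in>set P. length x = n) \<and> 0 \<in> ones ` set P \<and> n \<in> ones ` set P"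

lemma step_support:
  assumes k1: "1 \<le> \<kappa>" and mu: "\<mu> \<ge> (n + 1) * \<kappa>" and upos: "\<forall>i\<le>n. u i > 0"
    and vs: "valid_sort (unit_fit u) srt" and I: "InvP n \<mu> P"
    and Q: "Q \<in> set_pmf (ea_step (unit_fit u) srt pheno_dist 1 \<kappa> \<mu> n P)"
  shows "InvP n \<mu> Q \<and> ones ` set P \<subseteq> ones ` set Q"
proof -
  have "(n + 1) * \<kappa> \<ge> 1" using k1 by simp
  then have mu1: "\<mu> \<ge> 1" using mu by linarith
  then have ne: "{..<\<mu>} \<noteq> {}" by (auto simp: lessThan_empty_iff)
  obtain i y where i: "i < \<mu>" and y: "y \<in> set_pmf (mutate (1 / real n) (P ! i))"
    and Qs: "Q \<in> set_pmf (sel (unit_fit u) srt pheno_dist 1 \<kappa> \<mu> P y)"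
    using Q ne unfolding ea_step_sel by auto
  have lP: "length P = \<mu>" and lx: "\<forall>x\<in>set P. length x = n" using I InvP_def by auto
  have "P ! i \<in> set P" using i lP by simp
  then have ly: "length y = n" using mutate_length[OF y] lx by simp
  note S = sel_props[OF k1 mu upos vs lP lx ly Qs]
  then show ?thesis using I unfolding InvP_def by blast
qed

lemma step_prob:
  assumes k1: "1 \<le> \<kappa>" and mu: "\<mu> \<ge> (n + 1) * \<kappa>" and upos: "\<forall>i\<le>n. u i > 0"
    and vs: "valid_sort (unit_fit u) srt" and I: "InvP n \<mu> P" and n1: "n \<ge> 1"
    and nG: "\<not> all_niches_found n P"
  shows "measure_pmf.prob (ea_step (unit_fit u) srt pheno_dist 1 \<kappa> \<mu> n P) {Q. ones ` set P \<subset> ones ` set Q}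
     \<ge> 1 / (2 * exp 1 * real \<mu>)"
proof -
  define F where "F = ones ` set P"
  define E where "E = {Q. ones ` set P \<subset> ones ` set Q}"
  have "(n + 1) * \<kappa> \<ge> 1" using k1 by simp
  then have mu1: "\<mu> \<ge> 1" using mu by linarith
  have lP: "length P = \<mu>" and lx: "\<forall>x\<in>set P. length x = n" and F0: "0 \<in> F" and Fn: "n \<in> F"
    using I InvP_def F_def by auto
  define p where "p = 1 / real n"
  have p01: "0 \<le> p" "p \<le> 1" using n1 p_def by auto
  have ex: "\<exists>x A. x \<in> set P \<and> measure_pmf.prob (mutate p x) A \<ge> 1 / (2 * exp 1) \<and>
      (\<forall>y\<in>set_pmf (mutate p x). y \<in> A \<longrightarrow> ones y \<notin> F)"
  proof -
    define U where "U = {i. i \<le> n \<and> i \<notin> F}"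
    have Une: "U \<noteq> {}" using nG unfolding all_niches_found_def U_def F_def by auto
    have Ufin: "finite U" unfolding U_def by simp
    define i where "i = Min U"
    define j where "j = Max U"
    have iU: "i \<in> U" and jU: "j \<in> U" using Une Ufin i_def j_def by auto
    have ij: "i \<le> j" using Une Ufin i_def j_def by (simp add: jU)
    have i0: "i \<ge> 1" using iU F0 U_def by (cases i) auto
    have im: "i - 1 \<in> F"
    proof (rule ccontr)
      assume "i - 1 \<notin> F"
      then have "i - 1 \<in> U" using iU U_def by auto
      then have "i \<le> i - 1" using Ufin i_def by simp
      then show False using i0 by simp
    qed
    have jn: "j < n" using jU Fn U_def by (cases "j = n") auto
    have jp: "j + 1 \<in> F"
    proof (rule ccontr)
      assume "j + 1 \<notin> F"
      then have "j + 1 \<in> U" using jn U_def by auto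
      then have "j + 1 \<le> j" using Ufin j_def by simp
      then show False by simp
    qed
    have ebound: "real c * p * (1 - p) ^ (n - 1) \<ge> 1 / (2 * exp 1)" if c: "2 * c \<ge> n" for c
    proof -
      have cn: "real n \<le> 2 * real c" using c by (metis of_nat_le_iff of_nat_mult of_nat_numeral)
      have np: "real n > 0" using n1 by simp
      have "real c * p = real c / real n" using p_def by simp
      also have "\<dots> \<ge> 1 / 2" using cn np by (simp add: field_simps)
      finally have "real c * p \<ge> 1 / 2" .
      moreover have "(1 - p) ^ (n - 1) \<ge> exp (-1)" using exp_bound[OF n1] p_def by simp
      ultimately have "real c * p * (1 - p) ^ (n - 1) \<ge> 1 / 2 * exp (-1)"
        by (intro mult_mono) auto
      then show ?thesis by (simp add: exp_minus field_simps)
    qed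
    show ?thesis
    proof (cases "2 * (n - (i - 1)) \<ge> n")
      case True
      obtain x where x: "x \<in> set P" "ones x = i - 1" using im F_def by auto
      have lxn: "length x = n" using x lx by simp
      have cf: "count_list x False = n - (i - 1)" using count_sum[of x] x lxn unfolding ones_def by simp
      define A where "A = {r. count_list r True = count_list x True + 1}"
      have "measure_pmf.prob (mutate p x) A \<ge> count_list x (\<not> True) * p * (1 - p) ^ (length x - 1)"
        unfolding A_def by (rule mutate_up[OF p01])
      then have pr: "measure_pmf.prob (mutate p x) A \<ge> 1 / (2 * exp 1)"
        using ebound[OF True] cf lxn by simp
      have "\<forall>y\<in>set_pmf (mutate p x). y \<in> A \<longrightarrow> ones y \<notin> F"
      proof (intro ballI impI)
        fix y assume "y \<in> set_pmf (mutate p x)" "y \<in> A"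
        then have "ones y = i" using x i0 unfolding A_def ones_def by simp
        then show "ones y \<notin> F" using iU U_def by simp
      qed
      then show ?thesis using x pr by blast
    next
      case False
      have "i \<le> n" using iU U_def by simp
      then have c2: "2 * (j + 1) \<ge> n" using ij i0 False by arith
      obtain x where x: "x \<in> set P" "ones x = j + 1" using jp F_def by auto
      have lxn: "length x = n" using x lx by simp
      have cf: "count_list x True = j + 1" using x unfolding ones_def by simp
      define A where "A = {r. count_list r False = count_list x False + 1}"
      have "measure_pmf.prob (mutate p x) A \<ge> count_list x (\<not> False) * p * (1 - p) ^ (length x - 1)"
        unfolding A_def by (rule mutate_up[OF p01])
      then have pr: "measure_pmf.prob (mutate p x) A \<ge> 1 / (2 * exp 1)"
        using ebound[OF c2] cf lxn by simp
      have "\<forall>y\<in>set_pmf (mutate p x). y \<in> A \<longrightarrow> ones y \<notin> F"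
      proof (intro ballI impI)
        fix y assume y: "y \<in> set_pmf (mutate p x)" "y \<in> A"
        have ly: "length y = n" using mutate_length[OF y(1)] lxn by simp
        have "count_list y True + count_list y False = count_list x True + count_list x False"
          using count_sum[of x] count_sum[of y] ly lxn by simp
        then have "ones y = j" using y(2) cf unfolding A_def ones_def by simp
        then show "ones y \<notin> F" using jU U_def by simp
      qed
      then show ?thesis using x pr by blast
    qed
  qed
  then obtain x A where x: "x \<in> set P" and pr: "measure_pmf.prob (mutate p x) A \<ge> 1 / (2 * exp 1)"
    and new: "\<forall>y\<in>set_pmf (mutate p x). y \<in> A \<longrightarrow> ones y \<notin> F" by blast
  obtain i0 where i0: "i0 < \<mu>" "P ! i0 = x" using x lP by (auto simp: in_set_conv_nth)
  define g where "g = (\<lambda>i. measure_pmf.prob (bind_pmf (mutate p (P ! i)) (sel (unit_fit u) srt pheno_dist 1 \<kappa> \<mu> P)) E)"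
  have gi0: "g i0 \<ge> 1 / (2 * exp 1)"
  proof -
    have "measure_pmf.prob (mutate p x) A \<le> g i0"
      unfolding g_def i0(2)
    proof (rule bind_prob_ge)
      fix y assume y: "y \<in> set_pmf (mutate p x)" "y \<in> A"
      have ly: "length y = n" using mutate_length[OF y(1)] x lx by simp
      show "set_pmf (sel (unit_fit u) srt pheno_dist 1 \<kappa> \<mu> P y) \<subseteq> E"
      proof
        fix Q assume "Q \<in> set_pmf (sel (unit_fit u) srt pheno_dist 1 \<kappa> \<mu> P y)"
        note S = sel_props[OF k1 mu upos vs lP lx ly this]
        have "ones y \<notin> ones ` set P" using new y F_def by blast
        then show "Q \<in> E" using S unfolding E_def by blast
      qed
    qed
    then show ?thesis using pr by simp
  qed
  have "measure_pmf.prob (ea_step (unit_fit u) srt pheno_dist 1 \<kappa> \<mu> n P) E = (\<Sum>i<\<mu>. g i) / real \<mu>"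
    unfolding ea_step_sel prob_bind_pmf g_def p_def
    using mu1 by (subst integral_pmf_of_set) (auto simp: lessThan_empty_iff)
  also have "\<dots> \<ge> g i0 / real \<mu>"
  proof -
    have "g i0 \<le> (\<Sum>i<\<mu>. g i)"
      by (rule member_le_sum) (use i0 in \<open>auto simp: g_def\<close>)
    then show ?thesis by (simp add: divide_right_mono)
  qed
  finally have "measure_pmf.prob (ea_step (unit_fit u) srt pheno_dist 1 \<kappa> \<mu> n P) E \<ge> g i0 / real \<mu>" .
  moreover have "g i0 / real \<mu> \<ge> 1 / (2 * exp 1) / real \<mu>" by (rule divide_right_mono[OF gi0]) simp
  moreover have "1 / (2 * exp 1) / real \<mu> = 1 / (2 * exp 1 * real \<mu>)" by simp
  ultimately show ?thesis unfolding E_def by linarith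
qed


lemma hitting_generic:
  fixes K :: "'a \<Rightarrow> 'a pmf" and \<Phi> :: "'a \<Rightarrow> nat" and m :: nat and p :: real
  assumes p0: "p > 0"
    and istep: "\<And>P Q. Inv P \<Longrightarrow> \<not> G P \<Longrightarrow> Q \<in> set_pmf (K P) \<Longrightarrow> Inv Q \<and> \<Phi> P \<le> \<Phi> Q"
    and bnd: "\<And>P. Inv P \<Longrightarrow> \<Phi> P \<le> m"
    and prog: "\<And>P. Inv P \<Longrightarrow> \<not> G P \<Longrightarrow> measure_pmf.prob (K P) {Q. \<Phi> P < \<Phi> Q} \<ge> p"
    and I0: "Inv P0"
  shows "expected_hitting_time K G P0 \<le> ennreal ((real m - real (\<Phi> P0)) / p)"
proof -
  define h where "h = (\<lambda>Q. ennreal ((real m - real (\<Phi> Q)) / p))"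
  define SK where "SK = stopped_step G K"
  have sinv: "Inv Q" if "Inv P" "Q \<in> set_pmf (SK P)" for P Q
    using that istep unfolding SK_def stopped_step_def by (auto split: if_splits)
  have pinv: "\<forall>Q\<in>set_pmf (pop_dist SK t P0). Inv Q" for t
  proof (induction t)
    case 0 then show ?case using I0 by simp
  next
    case (Suc t) then show ?case using sinv by auto
  qed
  have one: "indicator {P. \<not> G P} P + (\<integral>\<^sup>+Q. h Q \<partial>SK P) \<le> h P" if IP: "Inv P" for P
  proof (cases "G P")
    case True then show ?thesis by (simp add: SK_def stopped_step_def)
  next
    case nG: False
    have SKP: "SK P = K P" using nG by (simp add: SK_def stopped_step_def)
    have pw: "h Q + ennreal (1 / p) * indicator {Q. \<Phi> P < \<Phi> Q} Q \<le> h P" if Q: "Q \<in> set_pmf (K P)" for Q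
    proof -
      have IQ: "Inv Q" and le: "\<Phi> P \<le> \<Phi> Q" using istep[OF IP nG Q] by auto
      have bQ: "\<Phi> Q \<le> m" using bnd[OF IQ] .
      show ?thesis
      proof (cases "\<Phi> P < \<Phi> Q")
        case True
        have nn: "(real m - real (\<Phi> Q)) / p \<ge> 0" using bQ p0 by simp
        have "h Q + ennreal (1 / p) * indicator {Q. \<Phi> P < \<Phi> Q} Q = ennreal ((real m - real (\<Phi> Q)) / p + 1 / p)"
          using True nn p0 by (simp add: h_def ennreal_plus)
        also have "\<dots> \<le> h P" unfolding h_def
        proof (rule ennreal_leI)
          have "real (\<Phi> P) + 1 \<le> real (\<Phi> Q)" using True by simp
          then have "real m - real (\<Phi> Q) + 1 \<le> real m - real (\<Phi> P)" by simp
          then have "(real m - real (\<Phi> Q) + 1) / p \<le> (real m - real (\<Phi> P)) / p"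
            using p0 by (intro divide_right_mono) auto
          then show "(real m - real (\<Phi> Q)) / p + 1 / p \<le> (real m - real (\<Phi> P)) / p"
            by (simp add: add_divide_distrib)
        qed
        finally show ?thesis .
      next
        case False
        have "h Q \<le> h P" unfolding h_def
          by (rule ennreal_leI) (use le p0 in \<open>simp add: divide_right_mono\<close>)
        then show ?thesis using False by simp
      qed
    qed
    have "1 + (\<integral>\<^sup>+Q. h Q \<partial>K P) \<le> ennreal (1 / p) * emeasure (measure_pmf (K P)) {Q. \<Phi> P < \<Phi> Q} + (\<integral>\<^sup>+Q. h Q \<partial>K P)"
    proof -
      have "ennreal 1 \<le> ennreal (1 / p * measure_pmf.prob (K P) {Q. \<Phi> P < \<Phi> Q})"
        using prog[OF IP nG] p0 by (intro ennreal_leI) (simp add: field_simps)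
      also have "\<dots> = ennreal (1 / p) * emeasure (measure_pmf (K P)) {Q. \<Phi> P < \<Phi> Q}"
        unfolding measure_pmf.emeasure_eq_measure by (rule ennreal_mult) (use p0 in auto)
      finally show ?thesis by (simp add: add_right_mono)
    qed
    also have "\<dots> = (\<integral>\<^sup>+Q. h Q + ennreal (1 / p) * indicator {Q. \<Phi> P < \<Phi> Q} Q \<partial>K P)"
      by (subst nn_integral_add) (auto simp: nn_integral_cmult add.commute)
    also have "\<dots> \<le> (\<integral>\<^sup>+Q. h P \<partial>K P)"
      by (rule nn_integral_mono_AE, rule AE_pmfI) (rule pw)
    also have "\<dots> = h P" by (simp add: measure_pmf.emeasure_space_1)
    finally show ?thesis using nG SKP by simp
  qed
  define a where "a = (\<lambda>t. ennreal (measure_pmf.prob (pop_dist SK t P0) {P. \<not> G P}))"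
  have a_int: "a t = (\<integral>\<^sup>+Q. indicator {P. \<not> G P} Q \<partial>pop_dist SK t P0)" for t
    by (simp add: a_def measure_pmf.emeasure_eq_measure)
  have main: "(\<Sum>s<t. a s) + (\<integral>\<^sup>+Q. h Q \<partial>pop_dist SK t P0) \<le> h P0" for t
  proof (induction t)
    case 0 then show ?case by simp
  next
    case (Suc t)
    have "a t + (\<integral>\<^sup>+Q. h Q \<partial>pop_dist SK (Suc t) P0) =
          (\<integral>\<^sup>+Q. indicator {P. \<not> G P} Q + (\<integral>\<^sup>+R. h R \<partial>SK Q) \<partial>pop_dist SK t P0)"
      by (simp add: a_int nn_integral_add)
    also have "\<dots> \<le> (\<integral>\<^sup>+Q. h Q \<partial>pop_dist SK t P0)"
    proof (rule nn_integral_mono_AE, rule AE_pmfI)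
      fix Q assume "Q \<in> set_pmf (pop_dist SK t P0)"
      then have "Inv Q" using pinv by blast
      then show "indicator {P. \<not> G P} Q + (\<integral>\<^sup>+R. h R \<partial>SK Q) \<le> h Q" by (rule one)
    qed
    finally have "a t + (\<integral>\<^sup>+Q. h Q \<partial>pop_dist SK (Suc t) P0) \<le> (\<integral>\<^sup>+Q. h Q \<partial>pop_dist SK t P0)" .
    then have "(\<Sum>s<Suc t. a s) + (\<integral>\<^sup>+Q. h Q \<partial>pop_dist SK (Suc t) P0) \<le>
       (\<Sum>s<t. a s) + (\<integral>\<^sup>+Q. h Q \<partial>pop_dist SK t P0)"
      by (simp add: add.assoc add_left_mono)
    then show ?case using Suc.IH by (rule order_trans)
  qed
  have "(\<Sum>s<t. a s) \<le> h P0" for t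
  proof -
    have "(\<Sum>s<t. a s) \<le> (\<Sum>s<t. a s) + (\<integral>\<^sup>+Q. h Q \<partial>pop_dist SK t P0)" by simp
    then show ?thesis using main[of t] by (rule order_trans)
  qed
  then have "suminf a \<le> h P0" by (intro suminf_le_const) auto
  then show ?thesis unfolding expected_hitting_time_def a_def SK_def h_def .
qed


lemma ones_replicate: "ones (replicate n b) = (if b then n else 0)"
  unfolding ones_def by (induction n) auto

theorem lemma3:
  shows "\<exists>C::real. C > 0 \<and>
    (\<forall>(n::nat) (\<kappa>::nat) (\<mu>::nat) (u::nat \<Rightarrow> real) srt (P0::bits list).
       n \<ge> 1 \<longrightarrow> \<kappa> \<ge> 1 \<longrightarrow> \<mu> \<ge> (n + 1) * \<kappa> \<longrightarrow>
       (\<forall>i\<le>n. u i > 0) \<longrightarrow> valid_sort (unit_fit u) srt \<longrightarrow>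
       length P0 = \<mu> \<longrightarrow> (\<forall>x\<in>set P0. length x = n) \<longrightarrow>
       replicate n False \<in> set P0 \<longrightarrow> replicate n True \<in> set P0 \<longrightarrow>
       expected_hitting_time (ea_step (unit_fit u) srt pheno_dist 1 \<kappa> \<mu> n)
         (all_niches_found n) P0 \<le> ennreal (C * real \<mu> * real n))"
proof (intro exI[of _ "2 * exp 1"] conjI allI impI)
  show "(0::real) < 2 * exp 1" by simp
  fix n \<kappa> \<mu> :: nat and u :: "nat \<Rightarrow> real" and srt and P0 :: "bits list"
  assume n1: "n \<ge> 1" and k1: "\<kappa> \<ge> 1" and mu: "\<mu> \<ge> (n + 1) * \<kappa>" and upos: "\<forall>i\<le>n. u i > 0"
    and vs: "valid_sort (unit_fit u) srt" and lP0: "length P0 = \<mu>" and lx0: "\<forall>x\<in>set P0. length x = n"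
    and z: "replicate n False \<in> set P0" and o: "replicate n True \<in> set P0"
  have "(n + 1) * \<kappa> \<ge> 1" using k1 by simp
  then have mu1: "\<mu> \<ge> 1" using mu by linarith
  define p where "p = 1 / (2 * exp 1 * real \<mu>)"
  define \<Phi> where "\<Phi> = (\<lambda>P::bits list. card (ones ` set P))"
  have p0: "p > 0" using mu1 p_def by simp
  have bndS: "ones ` set P \<subseteq> {..n}" if "InvP n \<mu> P" for P
  proof
    fix k assume "k \<in> ones ` set P"
    then obtain x where "x \<in> set P" "k = ones x" by blast
    then show "k \<in> {..n}" using that ones_le[of x] unfolding InvP_def by auto
  qed
  have r0: "ones (replicate n False) = 0" and r1: "ones (replicate n True) = n" by (simp_all add: ones_replicate)
  have "0 \<in> ones ` set P0" using imageI[OF z, of ones] r0 by simp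
  moreover have "n \<in> ones ` set P0" using imageI[OF o, of ones] r1 by simp
  ultimately have I0: "InvP n \<mu> P0" unfolding InvP_def using lP0 lx0 by blast
  have H: "expected_hitting_time (ea_step (unit_fit u) srt pheno_dist 1 \<kappa> \<mu> n) (all_niches_found n) P0
      \<le> ennreal ((real (n + 1) - real (\<Phi> P0)) / p)"
  proof (rule hitting_generic[where Inv = "InvP n \<mu>"])
    show "p > 0" by (rule p0)
    show "InvP n \<mu> P0" by (rule I0)
  next
    fix P Q assume IP: "InvP n \<mu> P" and "\<not> all_niches_found n P"
      and Q: "Q \<in> set_pmf (ea_step (unit_fit u) srt pheno_dist 1 \<kappa> \<mu> n P)"
    note S = step_support[OF k1 mu upos vs IP Q]
    then show "InvP n \<mu> Q \<and> \<Phi> P \<le> \<Phi> Q" unfolding \<Phi>_def by (auto intro: card_mono)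
  next
    fix P assume IP: "InvP n \<mu> P"
    show "\<Phi> P \<le> n + 1" unfolding \<Phi>_def using card_mono[OF _ bndS[OF IP]] by simp
  next
    fix P assume IP: "InvP n \<mu> P" and nG: "\<not> all_niches_found n P"
    have "{Q. ones ` set P \<subset> ones ` set Q} \<subseteq> {Q. \<Phi> P < \<Phi> Q}"
      unfolding \<Phi>_def by (auto intro: psubset_card_mono)
    then have "measure_pmf.prob (ea_step (unit_fit u) srt pheno_dist 1 \<kappa> \<mu> n P) {Q. ones ` set P \<subset> ones ` set Q}
       \<le> measure_pmf.prob (ea_step (unit_fit u) srt pheno_dist 1 \<kappa> \<mu> n P) {Q. \<Phi> P < \<Phi> Q}"
      by (rule measure_pmf.finite_measure_mono) simp
    then show "p \<le> measure_pmf.prob (ea_step (unit_fit u) srt pheno_dist 1 \<kappa> \<mu> n P) {Q. \<Phi> P < \<Phi> Q}"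
      using step_prob[OF k1 mu upos vs IP n1 nG] p_def by simp
  qed
  have "{0, n} \<subseteq> ones ` set P0" using I0 unfolding InvP_def by auto
  then have "card {0, n} \<le> \<Phi> P0" unfolding \<Phi>_def by (intro card_mono) auto
  then have c2: "\<Phi> P0 \<ge> 2" using n1 by simp
  have "(real (n + 1) - real (\<Phi> P0)) / p = (real (n + 1) - real (\<Phi> P0)) * (2 * exp 1 * real \<mu>)"
    using p_def by simp
  also have "\<dots> \<le> real n * (2 * exp 1 * real \<mu>)"
    using c2 by (intro mult_right_mono) auto
  also have "\<dots> = 2 * exp 1 * real \<mu> * real n" by simp
  finally have "(real (n + 1) - real (\<Phi> P0)) / p \<le> 2 * exp 1 * real \<mu> * real n" .
  then show "expected_hitting_time (ea_step (unit_fit u) srt pheno_dist 1 \<kappa> \<mu> n) (all_niches_found n) P0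
      \<le> ennreal (2 * exp 1 * real \<mu> * real n)"
    using H ennreal_leI order_trans by blast
qed

end
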